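(* For all $n\ge 1$, $f(n)<2n$.
   Context: $\mathbb{N}=\{0,1,2,\dots\}$. The sequence $f:\mathbb{N}\to\mathbb{N}$ is defined greedily: $f(0)=0$, and for $n\ge1$, $f(n)$ is the least natural number such that (i) $f(n)\notin\{f(0),f(1),\dots,f(n-1)\}$ and (ii) $\sum_{1\le i\le n} f(i)$ is divisible by $n$. *)

theory Defs
  imports Main
begin

(* vals n = [f 0, f 1, ..., f n] *)
fun vals :: "nat \<Rightarrow> nat list" where
  "vals 0 = [0]"
| "vals (Suc n) = vals n @
     [LEAST v. v \<notin> set (vals n) \<and> Suc n dvd ((\<Sum>i=1..n. vals n ! i) + v)]"

definition f :: "nat \<Rightarrow> nat" where
  "f n = vals n ! n"

lemma f_0: "f 0 = 0" by (simp add: f_def)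

end

theory Submission
  imports Defs
begin

lemma len_vals: "length (vals n) = Suc n"
  by (induct n) auto

lemma step_facts:
  fixes m c :: nat
  assumes S: "(\<Sum>i=1..m. vals m ! i) = m*c" and cm: "c \<le> m"
    and B: "\<forall>x\<in>set (vals m). x \<le> c+m"
  shows "\<exists>k. (\<Sum>i=1..Suc m. vals (Suc m) ! i) = Suc m * k \<and> k \<le> Suc m
     \<and> (\<forall>x\<in>set (vals (Suc m)). x \<le> k + Suc m)
     \<and> vals (Suc m) ! Suc m \<le> c + m + 1"
proof -
  define P where "P = (\<lambda>v. v \<notin> set (vals m) \<and> Suc m dvd ((\<Sum>i=1..m. vals m ! i) + v))"
  define v where "v = (LEAST v. P v)"
  have vs: "vals (Suc m) = vals m @ [v]" by (simp add: v_def P_def)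
  have Pw: "P (c+m+1)"
  proof -
    have "c+m+1 \<notin> set (vals m)" using B by fastforce
    moreover have "(\<Sum>i=1..m. vals m ! i) + (c+m+1) = Suc m * (c+1)" using S by simp
    ultimately show ?thesis unfolding P_def by (metis dvd_triv_left)
  qed
  have vle: "v \<le> c+m+1" unfolding v_def using Pw by (rule Least_le)
  have Pv: "P v" unfolding v_def using Pw by (rule LeastI)
  then obtain k where k: "m*c + v = Suc m * k" unfolding P_def using S by (auto elim!: dvdE)
  have "Suc m * k \<le> Suc m * (c+1)" using k vle by simp
  hence k1: "k \<le> c+1" by (simp only: mult_le_cancel1)
  have k2: "c \<le> k"
  proof (rule ccontr)
    assume "\<not> c \<le> k"
    hence "k+1 \<le> c" by simp
    hence "Suc m * (k+1) \<le> Suc m * c" by (rule mult_le_mono2)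
    hence "Suc m * k + Suc m \<le> m*c + c" by simp
    hence "m*c + v + Suc m \<le> m*c + c" using k by simp
    thus False using cm by simp
  qed
  have nth: "vals (Suc m) ! i = vals m ! i" if "i \<le> m" for i
    using that unfolding vs by (simp add: nth_append len_vals)
  have last: "vals (Suc m) ! Suc m = v" unfolding vs by (simp add: nth_append len_vals)
  have "(\<Sum>i=1..Suc m. vals (Suc m) ! i) = (\<Sum>i=1..m. vals (Suc m) ! i) + v"
    by (simp del: vals.simps add: last)
  also have "(\<Sum>i=1..m. vals (Suc m) ! i) = (\<Sum>i=1..m. vals m ! i)"
    by (rule sum.cong) (auto simp del: vals.simps simp: nth)
  finally have sum: "(\<Sum>i=1..Suc m. vals (Suc m) ! i) = Suc m * k" using S k by simp
  have "\<forall>x\<in>set (vals (Suc m)). x \<le> k + Suc m"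
  proof
    fix x assume "x \<in> set (vals (Suc m))"
    hence "x \<in> set (vals m) \<or> x = v" unfolding vs by auto
    thus "x \<le> k + Suc m" using B k2 vle by auto
  qed
  thus ?thesis using sum k1 cm vle last by (intro exI[of _ k]) auto
qed

lemma inv: "\<exists>c. (\<Sum>i=1..n. vals n ! i) = n*c \<and> c \<le> n \<and> (\<forall>x\<in>set (vals n). x \<le> c+n)"
proof (induct n)
  case 0 show ?case by (intro exI[of _ 0]) simp
next
  case (Suc m)
  then obtain c where "(\<Sum>i=1..m. vals m ! i) = m*c" "c \<le> m" "\<forall>x\<in>set (vals m). x \<le> c+m" by blast
  from step_facts[OF this] show ?case by blast
qed

theorem mainTheorem2:
  fixes n :: nat
  assumes "n \<ge> 1"
  shows "f n < 2 * n"
proof -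
  obtain m where n: "n = Suc m" using assms by (cases n) auto
  obtain c where "(\<Sum>i=1..m. vals m ! i) = m*c" "c \<le> m" "\<forall>x\<in>set (vals m). x \<le> c+m"
    using inv by blast
  from step_facts[OF this] \<open>c \<le> m\<close> have "vals (Suc m) ! Suc m \<le> 2*m+1" by auto
  thus ?thesis by (simp add: f_def n)
qed

end
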